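(* Let $\mathcal{D}^{\rm te}$ satisfy the test-distribution assumptions in the context, and let $(\bm x_1,y_1),\dots,(\bm x_N,y_N)$ be i.i.d. from $\mathcal{D}^{\rm te}$. Let $\bm b:=\bm 1_{d+1}$ and $\bm A:=\begin{bmatrix}\bm I_d\\ \bm 0_d^\top\end{bmatrix}\in\mathbb{R}^{(d+1)\times d}$. Then there is a constant $K>0$, depending only on the constants $C_i,C_{i,n}$ (through uniform upper bounds on them) and not on $d_{\rm rob},d_{\rm vul},d_{\rm irr},\alpha,\beta,\gamma,N$, such that $$\mathbb{E}\Big[\Big\|\tfrac1N\bm b^\top\bm Z\bm M\bm Z^\top\bm A\Big\|_1\Big]\le K\Big\{(d_{\rm rob}\alpha+d_{\rm vul}\beta+1)\Big(d_{\rm rob}\alpha+d_{\rm vul}\beta+\frac{d_{\rm irr}\gamma}{\sqrt N}\Big)+d_{\rm irr}\Big(\sqrt{\tfrac{d_{\rm irr}}{N}}+1\Big)\gamma^2\Big\}.$$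
   Context: $[n]:=\{1,\dots,n\}$; $U(\mathcal S)$ is the uniform distribution on $\mathcal S$; $\bm 1_a,\bm 0_a,\bm I_a$ denote the all-ones vector, all-zeros vector and identity. $\bm Z\in\mathbb{R}^{(d+1)\times(N+1)}$ has $n$-th column $(\bm x_n^\top,y_n)^\top$ for $n\le N$ and an arbitrary last column of the form $(\bm v^\top,0)^\top$; $\bm M:=\begin{bmatrix}\bm I_N&0\\0&0\end{bmatrix}$, so $\bm Z\bm M\bm Z^\top=\sum_{n=1}^N(\bm x_n^\top,y_n)^\top(\bm x_n^\top,y_n)$ does not depend on the last column. Test distribution: $[d]$ is partitioned into disjoint index sets $\mathcal S_{\rm rob},\mathcal S_{\rm vul},\mathcal S_{\rm irr}$ with sizes $d_{\rm rob},d_{\rm vul},d_{\rm irr}$; scales $\alpha>0$, $\beta>0$, $\gamma\ge0$. A sample $(\bm x,y)\sim\mathcal{D}^{\rm te}$ satisfies: (1) $y\sim U(\{\pm1\})$; (2) $\mathbb{E}[x_i]=0$ for $i\in\mathcal S_{\rm irr}$, and for every $i\in[d]$ there are constants $C_i>0$ and $C_{i,n}\ge0$ ($n=2,3,4$) with $\mathbb{E}[yx_i]=C_i\alpha$ for $i\in\mathcal S_{\rm rob}$, $=C_i\beta$ for $i\in\mathcal S_{\rm vul}$, $=0$ for $i\in\mathcal S_{\rm irr}$, and $|\mathbb{E}[(yx_i-\mathbb{E}[yx_i])^n]|\le C_{i,n}\alpha^n$, $C_{i,n}\beta^n$, $C_{i,n}\gamma^n$ for $i$ in $\mathcal S_{\rm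 rob}$, $\mathcal S_{\rm vul}$, $\mathcal S_{\rm irr}$ respectively; (3) there are constants $0\le q_{\rm rob},q_{\rm vul}<1$ such that the number of $i\in\mathcal S_{\rm rob}$ with $\sum_{j\in\mathcal S_{\rm rob}\cup\mathcal S_{\rm vul}}\mathrm{Cov}(x_i,x_j)<0$ is at most $q_{\rm rob}d_{\rm rob}$, and the number of $i\in\mathcal S_{\rm vul}$ with this property is at most $q_{\rm vul}d_{\rm vul}$; (4) for every $i\in\mathcal S_{\rm irr}$, $x_i$ is independent of $(y,(x_j)_{j\ne i})$. *)

theory Defs
  imports "HOL-Probability.Probability"
begin

text \<open>A sample is a pair (x, y) with x :: nat => real (only coordinates 1..d are used) and y :: real.
  Matrices are functions nat => nat => real, indexed from 1, with dimensions tracked explicitly.\<close>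

type_synonym sample = "(nat \<Rightarrow> real) \<times> real"
type_synonym rmat = "nat \<Rightarrow> nat \<Rightarrow> real"

definition mmul :: "nat \<Rightarrow> rmat \<Rightarrow> rmat \<Rightarrow> rmat" where
  "mmul m A B = (\<lambda>i j. \<Sum>k=1..m. A i k * B k j)"

definition mtr :: "rmat \<Rightarrow> rmat" where
  "mtr A = (\<lambda>i j. A j i)"

text \<open>Z in R^{(d+1) x (N+1)}: column n (1<=n<=N) is (x_n, y_n), column N+1 is (v, 0).\<close>
definition Zmat :: "nat \<Rightarrow> nat \<Rightarrow> (nat \<Rightarrow> real) \<Rightarrow> (nat \<Rightarrow> sample) \<Rightarrow> rmat" where
  "Zmat d N v s = (\<lambda>i n. if n \<le> N then (if i \<le> d then fst (s n) i else snd (s n))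
                          else (if i \<le> d then v i else 0))"

definition Mmat :: "nat \<Rightarrow> rmat" where
  "Mmat N = (\<lambda>i j. if i = j \<and> i \<le> N then 1 else 0)"

definition Amat :: "nat \<Rightarrow> rmat" where
  "Amat d = (\<lambda>i j. if i = j \<and> i \<le> d then 1 else 0)"

definition bT :: rmat where
  "bT = (\<lambda>i j. 1)"

definition row_l1 :: "nat \<Rightarrow> rmat \<Rightarrow> real" where
  "row_l1 d r = (\<Sum>j=1..d. \<bar>r 1 j\<bar>)"

definition quantity :: "nat \<Rightarrow> nat \<Rightarrow> (nat \<Rightarrow> real) \<Rightarrow> (nat \<Rightarrow> sample) \<Rightarrow> rmat" where
  "quantity d N v s = (\<lambda>i j. (1 / real N) *
     mmul (d+1) (mmul (N+1) (mmul (N+1) (mmul (d+1) bT (Zmat d N v s)) (Mmat N))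
                 (mtr (Zmat d N v s))) (Amat d) i j)"

definition cov :: "sample measure \<Rightarrow> (sample \<Rightarrow> real) \<Rightarrow> (sample \<Rightarrow> real) \<Rightarrow> real" where
  "cov D X Y = integral\<^sup>L D (\<lambda>z. (X z - integral\<^sup>L D X) * (Y z - integral\<^sup>L D Y))"

text \<open>In (4), prob_space.indep_var needs both variables to share a codomain type, so x_i is
  encoded as the sample with all other coordinates (and y) zeroed, and (y, (x_j)_{j ~= i})
  as the sample with coordinate i zeroed; these generate the same sigma-algebras.\<close>

definition test_dist :: "sample measure \<Rightarrow> nat \<Rightarrow> nat set \<Rightarrow> nat set \<Rightarrow> nat set \<Rightarrow>
    real \<Rightarrow> real \<Rightarrow> real \<Rightarrow> (nat \<Rightarrow> real) \<Rightarrow> (nat \<Rightarrow> nat \<Rightarrow> real) \<Rightarrow> real \<Rightarrow> real \<Rightarrow> bool" where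
  "test_dist D d Srob Svul Sirr \<alpha> \<beta> \<gamma> C Cn qr qv \<longleftrightarrow>
     prob_space D \<and> sets D = sets (borel :: sample measure) \<and>
     Srob \<union> Svul \<union> Sirr = {1..d} \<and> Srob \<inter> Svul = {} \<and> Srob \<inter> Sirr = {} \<and> Svul \<inter> Sirr = {} \<and>
     \<alpha> > 0 \<and> \<beta> > 0 \<and> \<gamma> \<ge> 0 \<and>
     \<comment> \<open>(1) y uniform on {+1,-1}\<close>
     measure D {z \<in> space D. snd z = 1} = 1/2 \<and> measure D {z \<in> space D. snd z = -1} = 1/2 \<and>
     \<comment> \<open>(2) moment conditions (the moments involved exist)\<close>
     (\<forall>i\<in>{1..d}. integrable D (\<lambda>z. snd z * fst z i) \<and>
        (\<forall>n\<in>{2,3,4::nat}. integrable D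
           (\<lambda>z. (snd z * fst z i - integral\<^sup>L D (\<lambda>w. snd w * fst w i)) ^ n))) \<and>
     (\<forall>i\<in>Sirr. integral\<^sup>L D (\<lambda>z. fst z i) = 0) \<and>
     (\<forall>i\<in>{1..d}. C i > 0 \<and> (\<forall>n\<in>{2,3,4::nat}. Cn i n \<ge> 0)) \<and>
     (\<forall>i\<in>Srob. integral\<^sup>L D (\<lambda>z. snd z * fst z i) = C i * \<alpha>) \<and>
     (\<forall>i\<in>Svul. integral\<^sup>L D (\<lambda>z. snd z * fst z i) = C i * \<beta>) \<and>
     (\<forall>i\<in>Sirr. integral\<^sup>L D (\<lambda>z. snd z * fst z i) = 0) \<and>
     (\<forall>i\<in>Srob. \<forall>n\<in>{2,3,4::nat}. \<bar>integral\<^sup>L D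
        (\<lambda>z. (snd z * fst z i - integral\<^sup>L D (\<lambda>w. snd w * fst w i)) ^ n)\<bar> \<le> Cn i n * \<alpha> ^ n) \<and>
     (\<forall>i\<in>Svul. \<forall>n\<in>{2,3,4::nat}. \<bar>integral\<^sup>L D
        (\<lambda>z. (snd z * fst z i - integral\<^sup>L D (\<lambda>w. snd w * fst w i)) ^ n)\<bar> \<le> Cn i n * \<beta> ^ n) \<and>
     (\<forall>i\<in>Sirr. \<forall>n\<in>{2,3,4::nat}. \<bar>integral\<^sup>L D
        (\<lambda>z. (snd z * fst z i - integral\<^sup>L D (\<lambda>w. snd w * fst w i)) ^ n)\<bar> \<le> Cn i n * \<gamma> ^ n) \<and>
     \<comment> \<open>(3) covariance condition\<close>
     0 \<le> qr \<and> qr < 1 \<and> 0 \<le> qv \<and> qv < 1 \<and>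
     real (card {i \<in> Srob. (\<Sum>j\<in>Srob \<union> Svul. cov D (\<lambda>z. fst z i) (\<lambda>z. fst z j)) < 0}) \<le> qr * real (card Srob) \<and>
     real (card {i \<in> Svul. (\<Sum>j\<in>Srob \<union> Svul. cov D (\<lambda>z. fst z i) (\<lambda>z. fst z j)) < 0}) \<le> qv * real (card Svul) \<and>
     \<comment> \<open>(4) irrelevant features independent of everything else\<close>
     (\<forall>i\<in>Sirr. prob_space.indep_var D (borel :: sample measure)
        (\<lambda>z. (\<lambda>j. if j = i then fst z j else 0, 0)) borel
        (\<lambda>z. (\<lambda>j. if j \<in> {1..d} - {i} then fst z j else 0, snd z)))"

end

theory Submission
  imports Defs
begin



lemma mfst: "(\<lambda>z::sample. fst z i) \<in> borel_measurable borel"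
proof -
  have "continuous_on UNIV (\<lambda>z::sample. (\<lambda>x. x i) (fst z))"
    by (rule continuous_on_compose2[OF continuous_on_product_coordinates continuous_on_fst]) (auto intro: continuous_on_id)
  then show ?thesis by (rule borel_measurable_continuous_onI)
qed

lemma msnd: "(\<lambda>z::sample. snd z) \<in> borel_measurable borel"
  by (rule borel_measurable_continuous_onI) (intro continuous_intros)

lemma CS_int:
  fixes f g :: "'a \<Rightarrow> real"
  assumes [measurable]: "f \<in> borel_measurable M" "g \<in> borel_measurable M"
    and "integrable M (\<lambda>x. (f x)^2)" "integrable M (\<lambda>x. (g x)^2)"
  shows "integrable M (\<lambda>x. f x * g x)"
proof (rule Bochner_Integration.integrable_bound)
  show "integrable M (\<lambda>x. ((f x)^2 + (g x)^2)/2)" using assms by auto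
  show "AE x in M. norm (f x * g x) \<le> norm (((f x)^2 + (g x)^2)/2)"
  proof (intro AE_I2)
    fix x have "0 \<le> (\<bar>f x\<bar> - \<bar>g x\<bar>)^2" by simp
    then show "norm (f x * g x) \<le> norm (((f x)^2 + (g x)^2)/2)"
      by (simp add: power2_eq_square abs_mult algebra_simps)
  qed
qed auto

lemma CS_le:
  fixes f g :: "'a \<Rightarrow> real"
  assumes [measurable]: "f \<in> borel_measurable M" "g \<in> borel_measurable M"
    and i1: "integrable M (\<lambda>x. (f x)^2)" and i2: "integrable M (\<lambda>x. (g x)^2)"
  shows "(\<integral>x. \<bar>f x * g x\<bar> \<partial>M) \<le> sqrt (\<integral>x. (f x)^2 \<partial>M) * sqrt (\<integral>x. (g x)^2 \<partial>M)"
proof -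
  have ifg: "integrable M (\<lambda>x. \<bar>f x * g x\<bar>)" using CS_int[OF assms] by auto
  have "(\<integral>\<^sup>+x. ennreal \<bar>f x\<bar> * ennreal \<bar>g x\<bar> \<partial>M)\<^sup>2 \<le> (\<integral>\<^sup>+x. (ennreal \<bar>f x\<bar>)^2 \<partial>M) * (\<integral>\<^sup>+x. (ennreal \<bar>g x\<bar>)^2 \<partial>M)"
    by (rule Cauchy_Schwarz_nn_integral) auto
  also have "(\<lambda>x. ennreal \<bar>f x\<bar> * ennreal \<bar>g x\<bar>) = (\<lambda>x. ennreal \<bar>f x * g x\<bar>)"
    by (auto simp: ennreal_mult[symmetric] abs_mult)
  also have "(\<lambda>x. (ennreal \<bar>f x\<bar>)^2) = (\<lambda>x. ennreal ((f x)^2))"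
    by (auto simp: ennreal_power)
  also have "(\<lambda>x. (ennreal \<bar>g x\<bar>)^2) = (\<lambda>x. ennreal ((g x)^2))"
    by (auto simp: ennreal_power)
  also have "(\<integral>\<^sup>+x. ennreal \<bar>f x * g x\<bar> \<partial>M) = ennreal (\<integral>x. \<bar>f x * g x\<bar> \<partial>M)"
    by (rule nn_integral_eq_integral[OF ifg]) auto
  also have "(\<integral>\<^sup>+x. ennreal ((f x)^2) \<partial>M) = ennreal (\<integral>x. (f x)^2 \<partial>M)"
    by (rule nn_integral_eq_integral[OF i1]) auto
  also have "(\<integral>\<^sup>+x. ennreal ((g x)^2) \<partial>M) = ennreal (\<integral>x. (g x)^2 \<partial>M)"
    by (rule nn_integral_eq_integral[OF i2]) auto
  finally have *: "ennreal ((\<integral>x. \<bar>f x * g x\<bar> \<partial>M)^2) \<le> ennreal ((\<integral>x. (f x)^2 \<partial>M) * (\<integral>x. (g x)^2 \<partial>M))"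
    by (simp add: ennreal_power ennreal_mult integral_nonneg_AE)
  have "(\<integral>x. \<bar>f x * g x\<bar> \<partial>M)^2 \<le> (\<integral>x. (f x)^2 \<partial>M) * (\<integral>x. (g x)^2 \<partial>M)"
    using * by (subst (asm) ennreal_le_iff) (auto intro!: mult_nonneg_nonneg integral_nonneg_AE)
  then show ?thesis
    by (metis real_le_rsqrt real_sqrt_mult)
qed




lemma PiM_single:
  fixes h :: "'a \<Rightarrow> real"
  assumes D: "prob_space D" and n: "n \<in> I" and h: "integrable D h"
  shows "integrable (PiM I (\<lambda>_. D)) (\<lambda>x. h (x n))"
    and "(\<integral>x. h (x n) \<partial>PiM I (\<lambda>_. D)) = integral\<^sup>L D h"
proof -
  have eq: "distr (PiM I (\<lambda>_. D)) D (\<lambda>\<omega>. \<omega> n) = D"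
    by (rule distr_PiM_component) (use D n in auto)
  have m: "(\<lambda>\<omega>. \<omega> n) \<in> measurable (PiM I (\<lambda>_. D)) D"
    using n by measurable
  have hb: "h \<in> borel_measurable D" using h by auto
  show "integrable (PiM I (\<lambda>_. D)) (\<lambda>x. h (x n))"
    using integrable_distr_eq[OF m hb] h eq by simp
  show "(\<integral>x. h (x n) \<partial>PiM I (\<lambda>_. D)) = integral\<^sup>L D h"
    using integral_distr[OF m hb] eq by simp
qed

lemma PiM_pair:
  fixes g :: "'a \<Rightarrow> real"
  assumes D: "prob_space D" and I: "finite I" and n: "n \<in> I" and m: "m \<in> I" and nm: "n \<noteq> m"
    and g: "integrable D g"
  shows "integrable (PiM I (\<lambda>_. D)) (\<lambda>x. g (x n) * g (x m))"
    and "(\<integral>x. g (x n) * g (x m) \<partial>PiM I (\<lambda>_. D)) = (integral\<^sup>L D g)^2"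
proof -
  interpret product_sigma_finite "\<lambda>_. D"
    by (simp add: product_sigma_finite_def D prob_space_imp_sigma_finite)
  interpret prob_space D by (rule D)
  have Inm: "I \<inter> {x. x = n \<or> x = m} = {n,m}" "I \<inter> {x. x \<in> {n,m}} = {n,m}" using n m by auto
  define f where "f k = (if k = n \<or> k = m then g else (\<lambda>_. 1::real))" for k
  have fi: "\<And>k. k \<in> I \<Longrightarrow> integrable D (f k)" using g by (auto simp: f_def)
  have pe: "(\<Prod>k\<in>I. f k (x k)) = g (x n) * g (x m)" for x
  proof -
    have "(\<Prod>k\<in>I. f k (x k)) = (\<Prod>k\<in>I. if k \<in> {n,m} then g (x k) else 1)"
      by (auto simp: f_def intro!: prod.cong)
    also have "\<dots> = (\<Prod>k\<in>{n,m}. g (x k))"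
      using I n m by (subst prod.If_cases) (simp_all add: Inm)
    also have "\<dots> = g (x n) * g (x m)" using nm by simp
    finally show ?thesis .
  qed
  have "(\<Prod>k\<in>I. integral\<^sup>L D (f k)) = (\<Prod>k\<in>I. if k \<in> {n,m} then integral\<^sup>L D g else 1)"
    by (auto simp: f_def prob_space intro!: prod.cong)
  also have "\<dots> = (\<Prod>k\<in>{n,m}. integral\<^sup>L D g)"
    using I n m by (subst prod.If_cases) (simp_all add: Inm)
  also have "\<dots> = (integral\<^sup>L D g)^2" using nm by (simp add: power2_eq_square)
  finally have pi: "(\<Prod>k\<in>I. integral\<^sup>L D (f k)) = (integral\<^sup>L D g)^2" .
  show "integrable (PiM I (\<lambda>_. D)) (\<lambda>x. g (x n) * g (x m))"
  proof -
    have "integrable (PiM I (\<lambda>_. D)) (\<lambda>x. \<Prod>k\<in>I. f k (x k))"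
      by (rule product_integrable_prod[OF I]) (rule fi)
    then show ?thesis by (simp add: pe)
  qed
  show "(\<integral>x. g (x n) * g (x m) \<partial>PiM I (\<lambda>_. D)) = (integral\<^sup>L D g)^2"
  proof -
    have "(\<integral>x. (\<Prod>k\<in>I. f k (x k)) \<partial>PiM I (\<lambda>_. D)) = (\<Prod>k\<in>I. integral\<^sup>L D (f k))"
      by (rule product_integral_prod[OF I]) (rule fi)
    then show ?thesis by (simp add: pe pi)
  qed
qed




definition avg :: "nat \<Rightarrow> ('a \<Rightarrow> real) \<Rightarrow> (nat \<Rightarrow> 'a) \<Rightarrow> real" where
  "avg N g x = (\<Sum>n\<in>{1..N}. g (x n)) / real N"

lemma jensen_sq:
  fixes X :: "'a \<Rightarrow> real"
  assumes "prob_space M" "X \<in> borel_measurable M" "integrable M (\<lambda>x. (X x)^2)"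
  shows "(\<integral>x. \<bar>X x\<bar> \<partial>M) \<le> sqrt (\<integral>x. (X x)^2 \<partial>M)"
proof -
  interpret prob_space M by fact
  have "(\<integral>x. \<bar>X x * 1\<bar> \<partial>M) \<le> sqrt (\<integral>x. (X x)^2 \<partial>M) * sqrt (\<integral>x. 1^2 \<partial>M)"
    by (rule CS_le) (use assms in auto)
  then show ?thesis by (simp add: prob_space)
qed

lemma avg_integrable:
  fixes g :: "'a \<Rightarrow> real"
  assumes D: "prob_space D" and g: "integrable D g"
  shows "integrable (PiM {1..N} (\<lambda>_. D)) (avg N g)"
proof -
  have "integrable (PiM {1..N} (\<lambda>_. D)) (\<lambda>x. (\<Sum>n\<in>{1..N}. g (x n)) / real N)"
    by (intro integrable_divide Bochner_Integration.integrable_sum PiM_single(1)[OF D _ g]) auto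
  then show ?thesis by (simp add: avg_def[abs_def])
qed

lemma avg_bound1:
  fixes g :: "'a \<Rightarrow> real"
  assumes D: "prob_space D" and g: "integrable D g" and N: "N \<ge> 1"
  shows "(\<integral>x. \<bar>avg N g x\<bar> \<partial>PiM {1..N} (\<lambda>_. D)) \<le> (\<integral>z. \<bar>g z\<bar> \<partial>D)"
proof -
  let ?P = "PiM {1..N} (\<lambda>_. D)"
  have ga: "integrable D (\<lambda>z. \<bar>g z\<bar>)" using g by auto
  have "(\<integral>x. \<bar>avg N g x\<bar> \<partial>?P) \<le> (\<integral>x. (\<Sum>n\<in>{1..N}. \<bar>g (x n)\<bar>) / real N \<partial>?P)"
  proof (rule integral_mono)
    show "integrable ?P (\<lambda>x. \<bar>avg N g x\<bar>)" using avg_integrable[OF D g] by auto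
    show "integrable ?P (\<lambda>x. (\<Sum>n\<in>{1..N}. \<bar>g (x n)\<bar>) / real N)"
      by (intro integrable_divide Bochner_Integration.integrable_sum PiM_single(1)[OF D _ ga]) auto
    fix x show "\<bar>avg N g x\<bar> \<le> (\<Sum>n\<in>{1..N}. \<bar>g (x n)\<bar>) / real N"
      unfolding avg_def using N by (auto simp: abs_div intro!: divide_right_mono sum_abs)
  qed
  also have "\<dots> = (\<Sum>n\<in>{1..N}. (\<integral>x. \<bar>g (x n)\<bar> \<partial>?P)) / real N"
    by (simp only: integral_divide_zero, subst Bochner_Integration.integral_sum) (auto intro!: PiM_single(1)[OF D _ ga])
  also have "\<dots> = (\<integral>z. \<bar>g z\<bar> \<partial>D)"
    using N by (simp add: PiM_single(2)[OF D _ ga])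
  finally show ?thesis .
qed

lemma avg_bound2:
  fixes g :: "'a \<Rightarrow> real"
  assumes D: "prob_space D" and gm: "g \<in> borel_measurable D" and g2: "integrable D (\<lambda>z. (g z)^2)"
    and g0: "integral\<^sup>L D g = 0" and N: "N \<ge> 1"
  shows "(\<integral>x. \<bar>avg N g x\<bar> \<partial>PiM {1..N} (\<lambda>_. D)) \<le> sqrt ((\<integral>z. (g z)^2 \<partial>D) / real N)"
proof -
  interpret prob_space D by fact
  let ?P = "PiM {1..N} (\<lambda>_. D)"
  have g: "integrable D g" using square_integrable_imp_integrable[OF gm g2] .
  have Pp: "prob_space ?P" by (intro prob_space_PiM) (simp add: D)
  have sq: "(avg N g x)^2 = (\<Sum>n\<in>{1..N}. \<Sum>m\<in>{1..N}. g (x n) * g (x m)) / (real N)^2" for x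
    unfolding avg_def by (simp add: power2_eq_square sum_product power_divide)
  have ti: "integrable ?P (\<lambda>x. g (x n) * g (x m))" if "n \<in> {1..N}" "m \<in> {1..N}" for n m
  proof (cases "n = m")
    case True
    then show ?thesis using PiM_single(1)[OF D that(1) g2] by (simp add: power2_eq_square)
  next
    case False
    then show ?thesis using PiM_pair(1)[OF D _ that False g] by simp
  qed
  have tv: "(\<integral>x. g (x n) * g (x m) \<partial>?P) = (if n = m then (\<integral>z. (g z)^2 \<partial>D) else 0)"
    if "n \<in> {1..N}" "m \<in> {1..N}" for n m
  proof (cases "n = m")
    case True
    then show ?thesis using PiM_single(2)[OF D that(1) g2] by (simp add: power2_eq_square)
  next
    case False
    then show ?thesis using PiM_pair(2)[OF D _ that False g] g0 by simp
  qed
  have i2: "integrable ?P (\<lambda>x. (avg N g x)^2)"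
    unfolding sq by (intro integrable_divide Bochner_Integration.integrable_sum ti) auto
  have "(\<integral>x. (avg N g x)^2 \<partial>?P) = (\<Sum>n\<in>{1..N}. \<Sum>m\<in>{1..N}. (\<integral>x. g (x n) * g (x m) \<partial>?P)) / (real N)^2"
  proof -
    have "(\<integral>x. (\<Sum>n\<in>{1..N}. \<Sum>m\<in>{1..N}. g (x n) * g (x m)) \<partial>?P) = (\<Sum>n\<in>{1..N}. (\<integral>x. (\<Sum>m\<in>{1..N}. g (x n) * g (x m)) \<partial>?P))"
      by (rule Bochner_Integration.integral_sum, rule Bochner_Integration.integrable_sum, rule ti) auto
    also have "\<dots> = (\<Sum>n\<in>{1..N}. \<Sum>m\<in>{1..N}. (\<integral>x. g (x n) * g (x m) \<partial>?P))"
      by (intro sum.cong refl Bochner_Integration.integral_sum ti) auto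
    finally show ?thesis unfolding sq by (simp only: integral_divide_zero)
  qed
  also have "\<dots> = (\<Sum>n\<in>{1..N}. (\<integral>z. (g z)^2 \<partial>D)) / (real N)^2"
  proof -
    have "(\<Sum>n\<in>{1..N}. \<Sum>m\<in>{1..N}. (\<integral>x. g (x n) * g (x m) \<partial>?P)) = (\<Sum>n\<in>{1..N}. \<Sum>m\<in>{1..N}. (if n = m then (\<integral>z. (g z)^2 \<partial>D) else 0))"
      by (intro sum.cong refl tv) auto
    then show ?thesis by simp
  qed
  also have "\<dots> = (\<integral>z. (g z)^2 \<partial>D) / real N"
    using N by (simp add: power2_eq_square)
  finally have e: "(\<integral>x. (avg N g x)^2 \<partial>?P) = (\<integral>z. (g z)^2 \<partial>D) / real N" .
  have am: "avg N g \<in> borel_measurable ?P" using avg_integrable[OF D g] by auto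
  show ?thesis using jensen_sq[OF Pp am i2] e by simp
qed




locale td =
  fixes D :: "sample measure" and d Srob Svul Sirr \<alpha> \<beta> \<gamma> C Cn qr qv Cbar
  assumes td: "test_dist D d Srob Svul Sirr \<alpha> \<beta> \<gamma> C Cn qr qv"
    and cb: "\<forall>i\<in>{1..d}. C i \<le> Cbar \<and> (\<forall>n\<in>{2,3,4::nat}. Cn i n \<le> Cbar)"
begin

lemma Dp: "prob_space D" using td unfolding test_dist_def by (elim conjE) assumption
lemma sD: "sets D = sets borel" using td unfolding test_dist_def by (elim conjE) assumption

sublocale prob_space D by (rule Dp)

lemma mD: "f \<in> borel_measurable borel \<Longrightarrow> f \<in> borel_measurable D"
  using measurable_cong_sets[OF sD refl] by blast

lemma mx[measurable]: "(\<lambda>z. fst z i) \<in> borel_measurable D" by (rule mD) (rule mfst)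
lemma my[measurable]: "snd \<in> borel_measurable D" by (rule mD) (rule msnd)

lemma tdD1: "\<forall>i\<in>{1..d}. integrable D (\<lambda>z. snd z * fst z i) \<and>
        (\<forall>n\<in>{2,3,4::nat}. integrable D
           (\<lambda>z. (snd z * fst z i - integral\<^sup>L D (\<lambda>w. snd w * fst w i)) ^ n))"
  using td unfolding test_dist_def by (elim conjE) assumption

lemma tdD2: "\<forall>i\<in>Sirr. integral\<^sup>L D (\<lambda>z. fst z i) = 0"
  using td unfolding test_dist_def by (elim conjE) assumption

lemma tdD3: "\<forall>i\<in>{1..d}. C i > 0 \<and> (\<forall>n\<in>{2,3,4::nat}. Cn i n \<ge> 0)"
  using td unfolding test_dist_def by (elim conjE) assumption

lemma tdD4: "\<forall>i\<in>Srob. integral\<^sup>L D (\<lambda>z. snd z * fst z i) = C i * \<alpha>"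
  using td unfolding test_dist_def by (elim conjE) assumption

lemma tdD5: "\<forall>i\<in>Svul. integral\<^sup>L D (\<lambda>z. snd z * fst z i) = C i * \<beta>"
  using td unfolding test_dist_def by (elim conjE) assumption

lemma tdD6: "\<forall>i\<in>Sirr. integral\<^sup>L D (\<lambda>z. snd z * fst z i) = 0"
  using td unfolding test_dist_def by (elim conjE) assumption

lemma tdD7: "\<forall>i\<in>Srob. \<forall>n\<in>{2,3,4::nat}. \<bar>integral\<^sup>L D
        (\<lambda>z. (snd z * fst z i - integral\<^sup>L D (\<lambda>w. snd w * fst w i)) ^ n)\<bar> \<le> Cn i n * \<alpha> ^ n"
  using td unfolding test_dist_def by (elim conjE) assumption

lemma tdD8: "\<forall>i\<in>Svul. \<forall>n\<in>{2,3,4::nat}. \<bar>integral\<^sup>L D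
        (\<lambda>z. (snd z * fst z i - integral\<^sup>L D (\<lambda>w. snd w * fst w i)) ^ n)\<bar> \<le> Cn i n * \<beta> ^ n"
  using td unfolding test_dist_def by (elim conjE) assumption

lemma tdD9: "\<forall>i\<in>Sirr. \<forall>n\<in>{2,3,4::nat}. \<bar>integral\<^sup>L D
        (\<lambda>z. (snd z * fst z i - integral\<^sup>L D (\<lambda>w. snd w * fst w i)) ^ n)\<bar> \<le> Cn i n * \<gamma> ^ n"
  using td unfolding test_dist_def by (elim conjE) assumption

lemma tdD10: "\<forall>i\<in>Sirr. prob_space.indep_var D (borel :: sample measure)
        (\<lambda>z. (\<lambda>j. if j = i then fst z j else 0, 0)) borel
        (\<lambda>z. (\<lambda>j. if j \<in> {1..d} - {i} then fst z j else 0, snd z))"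
  using td unfolding test_dist_def by (elim conjE) assumption

lemma tdD11: "measure D {z \<in> space D. snd z = 1} = 1/2"
  using td unfolding test_dist_def by (elim conjE) assumption

lemma tdD12: "measure D {z \<in> space D. snd z = -1} = 1/2"
  using td unfolding test_dist_def by (elim conjE) assumption

lemmas tdD = tdD1 tdD2 tdD3 tdD4 tdD5 tdD6 tdD7 tdD8 tdD9 tdD10 tdD11 tdD12

lemma parts1: "Srob \<union> Svul \<union> Sirr = {1..d}" using td unfolding test_dist_def by (elim conjE) assumption
lemma parts2: "Srob \<inter> Svul = {}" using td unfolding test_dist_def by (elim conjE) assumption
lemma parts3: "Srob \<inter> Sirr = {}" using td unfolding test_dist_def by (elim conjE) assumption
lemma parts4: "Svul \<inter> Sirr = {}" using td unfolding test_dist_def by (elim conjE) assumption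
lemmas parts = parts1 parts2 parts3 parts4
lemma pos1: "\<alpha> > 0" using td unfolding test_dist_def by (elim conjE) assumption
lemma pos2: "\<beta> > 0" using td unfolding test_dist_def by (elim conjE) assumption
lemma pos3: "\<gamma> \<ge> 0" using td unfolding test_dist_def by (elim conjE) assumption
lemmas pos = pos1 pos2 pos3

lemma fin: "finite Srob" "finite Svul" "finite Sirr"
  using parts(1) by (metis finite_Un finite_atLeastAtMost)+

lemma AEy: "AE z in D. snd z = 1 \<or> snd z = -1"
proof -
  have s1: "{z \<in> space D. snd z = 1} \<in> sets D" "{z \<in> space D. snd z = -1} \<in> sets D" by measurable
  have "measure D {z \<in> space D. snd z = 1} = 1/2" "measure D {z \<in> space D. snd z = -1} = 1/2"
    using tdD by blast+
  then have "prob ({z \<in> space D. snd z = 1} \<union> {z \<in> space D. snd z = -1}) = 1"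
    by (subst finite_measure_Union[OF s1]) auto
  from AE_prob_1[OF this] show ?thesis by auto
qed

lemma AEy2: "AE z in D. (snd z)^2 = 1"
  using AEy by eventually_elim auto

definition sc :: "nat \<Rightarrow> real" where
  "sc i = (if i \<in> Srob then \<alpha> else if i \<in> Svul then \<beta> else \<gamma>)"

definition B :: real where "B = \<bar>Cbar\<bar> + Cbar^2"

lemma sc_nonneg: "sc i \<ge> 0" using pos by (auto simp: sc_def)
lemma B_nonneg: "B \<ge> 0" by (simp add: B_def)

lemma yx_facts:
  assumes i: "i \<in> {1..d}"
  shows "integrable D (\<lambda>z. (snd z * fst z i)^2)" "(\<integral>z. (snd z * fst z i)^2 \<partial>D) \<le> B * (sc i)^2"
proof -
  define m where "m = (\<integral>z. snd z * fst z i \<partial>D)"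
  have iyx: "integrable D (\<lambda>z. snd z * fst z i)"
    and ih: "integrable D (\<lambda>z. (snd z * fst z i - m)^2)"
    using tdD(1) i unfolding m_def by auto
  have eq: "(snd z * fst z i)^2 = (snd z * fst z i - m)^2 + 2 * m * (snd z * fst z i) - m^2" for z
    by (simp add: power2_eq_square algebra_simps)
  show int: "integrable D (\<lambda>z. (snd z * fst z i)^2)"
    unfolding eq using ih iyx by auto
  have "(\<integral>z. (snd z * fst z i)^2 \<partial>D) = (\<integral>z. (snd z * fst z i - m)^2 \<partial>D) + 2 * m * m - m^2"
    unfolding eq using ih iyx by (simp add: prob_space m_def)
  also have "\<dots> = (\<integral>z. (snd z * fst z i - m)^2 \<partial>D) + m^2" by (simp add: power2_eq_square)
  finally have e: "(\<integral>z. (snd z * fst z i)^2 \<partial>D) = (\<integral>z. (snd z * fst z i - m)^2 \<partial>D) + m^2" .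
  have Cb: "C i \<le> Cbar" "Cn i 2 \<le> Cbar" "C i > 0" using cb tdD(3) i by auto
  have h: "(\<integral>z. (snd z * fst z i - m)^2 \<partial>D) \<le> Cbar * (sc i)^2"
  proof -
    have "\<bar>\<integral>z. (snd z * fst z i - m)^2 \<partial>D\<bar> \<le> Cn i 2 * (sc i)^2"
    proof -
      have "i \<in> Srob \<or> i \<in> Svul \<or> i \<in> Sirr" using i parts(1) by blast
      then show ?thesis
        using tdD(7,8,9) parts(2,3,4) unfolding m_def sc_def by auto
    qed
    also have "\<dots> \<le> Cbar * (sc i)^2" using Cb by (intro mult_right_mono) auto
    finally show ?thesis by simp
  qed
  have mm: "m^2 \<le> Cbar^2 * (sc i)^2"
  proof -
    have "m = C i * sc i \<or> m = 0"
    proof -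
      have "i \<in> Srob \<or> i \<in> Svul \<or> i \<in> Sirr" using i parts(1) by blast
      then show ?thesis
        using tdD(4,5,6) parts(2,3,4) unfolding m_def sc_def by auto
    qed
    then show ?thesis
    proof
      assume "m = C i * sc i"
      then have "m^2 = (C i)^2 * (sc i)^2" by (simp add: power_mult_distrib)
      also have "\<dots> \<le> Cbar^2 * (sc i)^2" using Cb by (intro mult_right_mono power_mono) auto
      finally show ?thesis .
    qed simp
  qed
  show "(\<integral>z. (snd z * fst z i)^2 \<partial>D) \<le> B * (sc i)^2"
  proof -
    have "Cbar * (sc i)^2 \<le> \<bar>Cbar\<bar> * (sc i)^2" by (intro mult_right_mono) auto
    moreover have "B * (sc i)^2 = \<bar>Cbar\<bar> * (sc i)^2 + Cbar^2 * (sc i)^2" unfolding B_def by (simp add: distrib_right)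
    ultimately show ?thesis using e h mm by linarith
  qed
qed

lemma x_facts:
  assumes i: "i \<in> {1..d}"
  shows "integrable D (\<lambda>z. (fst z i)^2)" "(\<integral>z. (fst z i)^2 \<partial>D) \<le> B * (sc i)^2"
    "(\<integral>z. (snd z * fst z i)^2 \<partial>D) = (\<integral>z. (fst z i)^2 \<partial>D)"
    "integrable D (\<lambda>z. fst z i)"
proof -
  have ae: "AE z in D. (snd z * fst z i)^2 = (fst z i)^2"
    using AEy2 by eventually_elim (simp add: power_mult_distrib)
  show i1: "integrable D (\<lambda>z. (fst z i)^2)"
    using integrable_cong_AE[OF _ _ ae] yx_facts(1)[OF i] by simp
  show e: "(\<integral>z. (snd z * fst z i)^2 \<partial>D) = (\<integral>z. (fst z i)^2 \<partial>D)"
    by (rule integral_cong_AE[OF _ _ ae]) auto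
  show "(\<integral>z. (fst z i)^2 \<partial>D) \<le> B * (sc i)^2" using yx_facts(2)[OF i] e by simp
  show "integrable D (\<lambda>z. fst z i)" by (rule square_integrable_imp_integrable[OF _ i1]) auto
qed

end




context td begin

definition rest :: "nat \<Rightarrow> sample \<Rightarrow> sample" where
  "rest j z = (\<lambda>k. if k \<in> {1..d} - {j} then fst z k else 0, snd z)"

lemma indep_irr:
  fixes \<phi> :: "real \<Rightarrow> real" and F :: "sample \<Rightarrow> real"
  assumes j: "j \<in> Sirr" and [measurable]: "\<phi> \<in> borel_measurable borel" "F \<in> borel_measurable borel"
    and i1: "integrable D (\<lambda>z. \<phi> (fst z j))" and i2: "integrable D (\<lambda>z. F (rest j z))"
  shows "integrable D (\<lambda>z. \<phi> (fst z j) * F (rest j z))"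
    "(\<integral>z. \<phi> (fst z j) * F (rest j z) \<partial>D) = (\<integral>z. \<phi> (fst z j) \<partial>D) * (\<integral>z. F (rest j z) \<partial>D)"
proof -
  have ind: "indep_var borel (\<lambda>z. (\<lambda>k. if k = j then fst z k else 0, 0::real)) borel (rest j)"
    using tdD10 j unfolding rest_def by blast
  have m1: "(\<lambda>w::sample. \<phi> (fst w j)) \<in> borel \<rightarrow>\<^sub>M borel" using mfst[of j] by measurable
  have "indep_var borel ((\<lambda>w::sample. \<phi> (fst w j)) \<circ> (\<lambda>z. (\<lambda>k. if k = j then fst z k else 0, 0::real))) borel (F \<circ> rest j)"
    by (rule indep_var_compose[OF ind m1]) simp
  then have ind2: "indep_var borel (\<lambda>z. \<phi> (fst z j)) borel (\<lambda>z. F (rest j z))"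
    by (simp add: comp_def)
  show "integrable D (\<lambda>z. \<phi> (fst z j) * F (rest j z))"
    by (rule indep_var_integrable[OF ind2 i1 i2])
  show "(\<integral>z. \<phi> (fst z j) * F (rest j z) \<partial>D) = (\<integral>z. \<phi> (fst z j) \<partial>D) * (\<integral>z. F (rest j z) \<partial>D)"
    by (rule indep_var_lebesgue_integral[OF ind2 i1 i2])
qed

lemma Sirr_sub: "Sirr \<subseteq> {1..d}" "Srob \<subseteq> {1..d}" "Svul \<subseteq> {1..d}" using parts(1) by auto

lemma pair_irr:
  assumes j: "j \<in> Sirr" and i: "i \<in> {1..d}" "i \<noteq> j"
  shows "integrable D (\<lambda>z. fst z j * fst z i)" "(\<integral>z. fst z j * fst z i \<partial>D) = 0"
    "integrable D (\<lambda>z. (fst z j * fst z i)^2)"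
    "(\<integral>z. (fst z j * fst z i)^2 \<partial>D) = (\<integral>z. (fst z j)^2 \<partial>D) * (\<integral>z. (fst z i)^2 \<partial>D)"
proof -
  have jd: "j \<in> {1..d}" using j Sirr_sub by auto
  have r: "fst (rest j z) i = fst z i" for z using i by (simp add: rest_def)
  note A = indep_irr[OF j, of "\<lambda>t. t" "\<lambda>w. fst w i", unfolded r]
  note B = indep_irr[OF j, of "\<lambda>t. t^2" "\<lambda>w. (fst w i)^2", unfolded r]
  show "integrable D (\<lambda>z. fst z j * fst z i)"
    using A(1) x_facts(4)[OF jd] x_facts(4)[OF i(1)] mfst by auto
  show "(\<integral>z. fst z j * fst z i \<partial>D) = 0"
    using A(2) x_facts(4)[OF jd] x_facts(4)[OF i(1)] mfst tdD2 j by auto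
  show "integrable D (\<lambda>z. (fst z j * fst z i)^2)"
    using B(1) x_facts(1)[OF jd] x_facts(1)[OF i(1)] mfst by (auto simp: power_mult_distrib)
  show "(\<integral>z. (fst z j * fst z i)^2 \<partial>D) = (\<integral>z. (fst z j)^2 \<partial>D) * (\<integral>z. (fst z i)^2 \<partial>D)"
    using B(2) x_facts(1)[OF jd] x_facts(1)[OF i(1)] mfst by (auto simp: power_mult_distrib)
qed

definition T :: "nat \<Rightarrow> sample \<Rightarrow> real" where
  "T j z = (\<Sum>i\<in>Sirr - {j}. fst z i)"

lemma T_facts:
  assumes j: "j \<in> Sirr"
  shows "integrable D (\<lambda>z. (T j z)^2)"
    "(\<integral>z. (T j z)^2 \<partial>D) = (\<Sum>i\<in>Sirr - {j}. (\<integral>z. (fst z i)^2 \<partial>D))"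
    "integrable D (\<lambda>z. fst z j * T j z)" "(\<integral>z. fst z j * T j z \<partial>D) = 0"
    "integrable D (\<lambda>z. (fst z j * T j z)^2)"
    "(\<integral>z. (fst z j * T j z)^2 \<partial>D) = (\<integral>z. (fst z j)^2 \<partial>D) * (\<integral>z. (T j z)^2 \<partial>D)"
proof -
  let ?A = "Sirr - {j}"
  have jd: "j \<in> {1..d}" using j Sirr_sub by auto
  have fA: "finite ?A" using fin by auto
  have Ad: "\<And>i. i \<in> ?A \<Longrightarrow> i \<in> {1..d}" using Sirr_sub by auto
  have ii: "integrable D (\<lambda>z. fst z i * fst z k)" if "i \<in> ?A" "k \<in> ?A" for i k
  proof (cases "i = k")
    case True then show ?thesis using x_facts(1)[OF Ad[OF that(1)]] by (simp add: power2_eq_square)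
  next
    case False then show ?thesis using pair_irr(1)[of i k] that Ad by auto
  qed
  have sqT: "(T j z)^2 = (\<Sum>i\<in>?A. \<Sum>k\<in>?A. fst z i * fst z k)" for z
    unfolding T_def by (simp add: power2_eq_square sum_product)
  show iT: "integrable D (\<lambda>z. (T j z)^2)"
    unfolding sqT by (rule Bochner_Integration.integrable_sum, rule Bochner_Integration.integrable_sum, rule ii)
  have "(\<integral>z. (T j z)^2 \<partial>D) = (\<Sum>i\<in>?A. \<Sum>k\<in>?A. (\<integral>z. fst z i * fst z k \<partial>D))"
    unfolding sqT
    by (subst Bochner_Integration.integral_sum, rule Bochner_Integration.integrable_sum, rule ii, assumption+,
        rule sum.cong, rule refl, rule Bochner_Integration.integral_sum, rule ii)
  also have "\<dots> = (\<Sum>i\<in>?A. \<Sum>k\<in>?A. (if i = k then (\<integral>z. (fst z i)^2 \<partial>D) else 0))"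
  proof (intro sum.cong refl)
    fix i k assume "i \<in> ?A" "k \<in> ?A"
    then show "(\<integral>z. fst z i * fst z k \<partial>D) = (if i = k then (\<integral>z. (fst z i)^2 \<partial>D) else 0)"
      using pair_irr(2)[of i k] Ad by (auto simp: power2_eq_square)
  qed
  also have "\<dots> = (\<Sum>i\<in>?A. (\<integral>z. (fst z i)^2 \<partial>D))" using fA by simp
  finally show "(\<integral>z. (T j z)^2 \<partial>D) = (\<Sum>i\<in>Sirr - {j}. (\<integral>z. (fst z i)^2 \<partial>D))" .
  have iT1: "integrable D (T j)"
    by (rule square_integrable_imp_integrable[OF _ iT]) (simp add: T_def)
  have r: "T j z = (\<lambda>w. \<Sum>i\<in>?A. fst w i) (rest j z)" for z
    unfolding T_def rest_def using Ad by (auto intro!: sum.cong)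
  have mF: "(\<lambda>w::sample. \<Sum>i\<in>?A. fst w i) \<in> borel_measurable borel"
    using mfst by measurable
  have mF2: "(\<lambda>w::sample. (\<Sum>i\<in>?A. fst w i)^2) \<in> borel_measurable borel"
    using mfst by measurable
  have T0: "(\<integral>z. T j z \<partial>D) = 0"
    unfolding T_def using tdD2 x_facts(4) Ad
    by (subst Bochner_Integration.integral_sum) auto
  note A = indep_irr[OF j, of "\<lambda>t. t" "\<lambda>w. \<Sum>i\<in>?A. fst w i", folded r]
  note B = indep_irr[OF j, of "\<lambda>t. t^2" "\<lambda>w. (\<Sum>i\<in>?A. fst w i)^2", simplified r[symmetric]]
  show "integrable D (\<lambda>z. fst z j * T j z)"
    using A(1) x_facts(4)[OF jd] iT1 mF by auto
  show "(\<integral>z. fst z j * T j z \<partial>D) = 0"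
    using A(2) x_facts(4)[OF jd] iT1 mF T0 by auto
  have B': "integrable D (\<lambda>z. (fst z j)^2 * (T j z)^2)"
    "(\<integral>z. (fst z j)^2 * (T j z)^2 \<partial>D) = (\<integral>z. (fst z j)^2 \<partial>D) * (\<integral>z. (T j z)^2 \<partial>D)"
    using B x_facts(1)[OF jd] iT mF2 r by (auto simp: T_def)
  show "integrable D (\<lambda>z. (fst z j * T j z)^2)" using B'(1) by (simp add: power_mult_distrib)
  show "(\<integral>z. (fst z j * T j z)^2 \<partial>D) = (\<integral>z. (fst z j)^2 \<partial>D) * (\<integral>z. (T j z)^2 \<partial>D)"
    using B'(2) by (simp add: power_mult_distrib)
qed

end



lemma avg_add: "avg N (\<lambda>z. f z + g z) x = avg N f x + avg N g x"
  unfolding avg_def by (simp add: sum.distrib add_divide_distrib)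

lemma avg_sum: "finite A \<Longrightarrow> avg N (\<lambda>z. \<Sum>i\<in>A. f i z) x = (\<Sum>i\<in>A. avg N (f i) x)"
  unfolding avg_def by (simp add: sum_divide_distrib[symmetric] sum.swap[of _ A])

lemma avg_abs_int:
  fixes g :: "'a \<Rightarrow> real"
  assumes "prob_space D" "integrable D g"
  shows "integrable (PiM {1..N} (\<lambda>_. D)) (\<lambda>x. \<bar>avg N g x\<bar>)"
  using avg_integrable[OF assms] by auto

lemma quantity_eq:
  assumes j: "j \<in> {1..d}"
  shows "quantity d N v s 1 j = avg N (\<lambda>z. ((\<Sum>i\<in>{1..d}. fst z i) + snd z) * fst z j) s"
proof -
  let ?Z = "Zmat d N v s"
  have insd: "{1..d+1} = insert (d+1) {1..d}" and insN: "{1..N+1} = insert (N+1) {1..N}" by auto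
  define P where "P = mmul (d+1) bT ?Z"
  have P: "P i n = (\<Sum>k\<in>{1..d}. fst (s n) k) + snd (s n)" if "n \<le> N" for i n
  proof -
    have "P i n = (\<Sum>k\<in>insert (d+1) {1..d}. ?Z k n)" unfolding P_def mmul_def bT_def insd by simp
    also have "\<dots> = ?Z (d+1) n + (\<Sum>k\<in>{1..d}. ?Z k n)" by (rule sum.insert) auto
    also have "\<dots> = (\<Sum>k\<in>{1..d}. fst (s n) k) + snd (s n)"
      using that unfolding Zmat_def by (auto intro!: sum.cong)
    finally show ?thesis .
  qed
  have PM: "mmul (N+1) P (Mmat N) i m = (if m \<in> {1..N} then P i m else 0)" for i m
  proof -
    have "mmul (N+1) P (Mmat N) i m = (\<Sum>k\<in>{1..N+1}. if k = m then (if m \<le> N then P i k else 0) else 0)"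
      unfolding mmul_def Mmat_def by (intro sum.cong) auto
    also have "\<dots> = (if m \<in> {1..N} then P i m else 0)"
      by (subst sum.delta) auto
    finally show ?thesis .
  qed
  have R: "mmul (N+1) (mmul (N+1) P (Mmat N)) (mtr ?Z) i j' = (\<Sum>k\<in>{1..N}. P i k * ?Z j' k)" for i j'
  proof -
    have "mmul (N+1) (mmul (N+1) P (Mmat N)) (mtr ?Z) i j' = (\<Sum>k\<in>{1..N+1}. (if k \<in> {1..N} then P i k else 0) * ?Z j' k)"
      unfolding mmul_def[of "N+1" "mmul (N+1) P (Mmat N)"] mtr_def PM by simp
    also have "\<dots> = (\<Sum>k\<in>insert (N+1) {1..N}. (if k \<in> {1..N} then P i k else 0) * ?Z j' k)"
      unfolding insN ..
    also have "\<dots> = (\<Sum>k\<in>{1..N}. (if k \<in> {1..N} then P i k else 0) * ?Z j' k)"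
      by (subst sum.insert) auto
    also have "\<dots> = (\<Sum>k\<in>{1..N}. P i k * ?Z j' k)"
      by (rule sum.cong) auto
    finally show ?thesis .
  qed
  have A: "mmul (d+1) Rm (Amat d) i j = Rm i j" for Rm i
  proof -
    have "mmul (d+1) Rm (Amat d) i j = (\<Sum>k\<in>{1..d+1}. if k = j then Rm i k else 0)"
      unfolding mmul_def Amat_def using j by (intro sum.cong) auto
    also have "\<dots> = Rm i j" using j by (subst sum.delta) auto
    finally show ?thesis .
  qed
  have "quantity d N v s 1 j = (1 / real N) * (\<Sum>k\<in>{1..N}. P 1 k * ?Z j k)"
    unfolding quantity_def P_def[symmetric] A R ..
  also have "\<dots> = avg N (\<lambda>z. ((\<Sum>i\<in>{1..d}. fst z i) + snd z) * fst z j) s"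
    unfolding avg_def using j by (simp add: P Zmat_def)
  finally show ?thesis .
qed




context td begin

definition sig :: "nat \<Rightarrow> real" where "sig i = sqrt (\<integral>z. (fst z i)^2 \<partial>D)"

lemma sig_nonneg: "sig i \<ge> 0"
  unfolding sig_def by (simp add: integral_nonneg_AE)

lemma sig_sq: "(sig i)^2 = (\<integral>z. (fst z i)^2 \<partial>D)"
  unfolding sig_def by (simp add: integral_nonneg_AE)

lemma sig_le: "i \<in> {1..d} \<Longrightarrow> sig i \<le> sqrt B * sc i"
proof -
  assume i: "i \<in> {1..d}"
  have "sig i \<le> sqrt (B * (sc i)^2)" unfolding sig_def using x_facts(2)[OF i] by simp
  also have "\<dots> = sqrt B * sc i" using sc_nonneg by (simp add: real_sqrt_mult)
  finally show ?thesis .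
qed

lemma intD_xx: "i \<in> {1..d} \<Longrightarrow> j \<in> {1..d} \<Longrightarrow> integrable D (\<lambda>z. fst z i * fst z j)"
  by (rule CS_int) (auto intro: x_facts(1))

lemma intD_yx: "j \<in> {1..d} \<Longrightarrow> integrable D (\<lambda>z. snd z * fst z j)"
  using tdD1 by blast

lemma e_yx:
  assumes j: "j \<in> {1..d}" and N: "N \<ge> 1"
  shows "(\<integral>x. \<bar>avg N (\<lambda>z. snd z * fst z j) x\<bar> \<partial>PiM {1..N} (\<lambda>_. D)) \<le> sig j"
proof -
  have "(\<integral>x. \<bar>avg N (\<lambda>z. snd z * fst z j) x\<bar> \<partial>PiM {1..N} (\<lambda>_. D)) \<le> (\<integral>z. \<bar>snd z * fst z j\<bar> \<partial>D)"
    by (rule avg_bound1[OF Dp intD_yx[OF j] N])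
  also have "\<dots> \<le> sqrt (\<integral>z. (snd z * fst z j)^2 \<partial>D)"
    by (rule jensen_sq[OF Dp]) (auto intro: yx_facts(1)[OF j])
  also have "\<dots> = sig j" unfolding sig_def x_facts(3)[OF j] ..
  finally show ?thesis .
qed

lemma e_yx_irr:
  assumes j: "j \<in> Sirr" and N: "N \<ge> 1"
  shows "(\<integral>x. \<bar>avg N (\<lambda>z. snd z * fst z j) x\<bar> \<partial>PiM {1..N} (\<lambda>_. D)) \<le> sig j / sqrt N"
proof -
  have jd: "j \<in> {1..d}" using j Sirr_sub by auto
  have "(\<integral>x. \<bar>avg N (\<lambda>z. snd z * fst z j) x\<bar> \<partial>PiM {1..N} (\<lambda>_. D)) \<le> sqrt ((\<integral>z. (snd z * fst z j)^2 \<partial>D) / real N)"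
    by (rule avg_bound2[OF Dp _ yx_facts(1)[OF jd] _ N]) (use tdD6 j in auto)
  also have "\<dots> = sig j / sqrt N" unfolding sig_def x_facts(3)[OF jd] by (simp add: real_sqrt_divide)
  finally show ?thesis .
qed

lemma e_xx:
  assumes i: "i \<in> {1..d}" and j: "j \<in> {1..d}" and N: "N \<ge> 1"
  shows "(\<integral>x. \<bar>avg N (\<lambda>z. fst z i * fst z j) x\<bar> \<partial>PiM {1..N} (\<lambda>_. D)) \<le> sig i * sig j"
proof -
  have "(\<integral>x. \<bar>avg N (\<lambda>z. fst z i * fst z j) x\<bar> \<partial>PiM {1..N} (\<lambda>_. D)) \<le> (\<integral>z. \<bar>fst z i * fst z j\<bar> \<partial>D)"
    by (rule avg_bound1[OF Dp intD_xx[OF i j] N])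
  also have "\<dots> \<le> sig i * sig j"
    unfolding sig_def by (rule CS_le) (auto intro: x_facts(1) i j)
  finally show ?thesis .
qed

lemma e_xx_irr:
  assumes i: "i \<in> Sirr" and j: "j \<in> {1..d}" "j \<noteq> i" and N: "N \<ge> 1"
  shows "(\<integral>x. \<bar>avg N (\<lambda>z. fst z i * fst z j) x\<bar> \<partial>PiM {1..N} (\<lambda>_. D)) \<le> sig i * sig j / sqrt N"
proof -
  have "(\<integral>x. \<bar>avg N (\<lambda>z. fst z i * fst z j) x\<bar> \<partial>PiM {1..N} (\<lambda>_. D)) \<le> sqrt ((\<integral>z. (fst z i * fst z j)^2 \<partial>D) / real N)"
    by (rule avg_bound2[OF Dp _ pair_irr(3)[OF i j] pair_irr(2)[OF i j] N]) auto
  also have "\<dots> = sig i * sig j / sqrt N"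
    unfolding pair_irr(4)[OF i j] sig_sq[symmetric] by (simp add: real_sqrt_divide real_sqrt_mult sig_nonneg)
  finally show ?thesis .
qed

definition W :: real where "W = sqrt (\<Sum>i\<in>Sirr. (sig i)^2)"

lemma e_xT:
  assumes j: "j \<in> Sirr" and N: "N \<ge> 1"
  shows "(\<integral>x. \<bar>avg N (\<lambda>z. fst z j * T j z) x\<bar> \<partial>PiM {1..N} (\<lambda>_. D)) \<le> sig j * W / sqrt N"
proof -
  have mT: "(\<lambda>z. fst z j * T j z) \<in> borel_measurable D" unfolding T_def by measurable
  have "(\<integral>x. \<bar>avg N (\<lambda>z. fst z j * T j z) x\<bar> \<partial>PiM {1..N} (\<lambda>_. D)) \<le> sqrt ((\<integral>z. (fst z j * T j z)^2 \<partial>D) / real N)"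
    by (rule avg_bound2[OF Dp mT T_facts(5)[OF j] T_facts(4)[OF j] N])
  also have "(\<integral>z. (fst z j * T j z)^2 \<partial>D) = (sig j)^2 * (\<Sum>i\<in>Sirr - {j}. (sig i)^2)"
    unfolding T_facts(6)[OF j] T_facts(2)[OF j] sig_sq ..
  also have "(\<Sum>i\<in>Sirr - {j}. (sig i)^2) \<le> (\<Sum>i\<in>Sirr. (sig i)^2)"
    by (rule sum_mono2) (use fin in auto)
  then have "sqrt ((sig j)^2 * (\<Sum>i\<in>Sirr - {j}. (sig i)^2) / real N) \<le> sqrt ((sig j)^2 * (\<Sum>i\<in>Sirr. (sig i)^2) / real N)"
    by (intro real_sqrt_le_mono divide_right_mono mult_left_mono) auto
  also have "\<dots> = sig j * W / sqrt N"
    unfolding W_def by (simp add: real_sqrt_divide real_sqrt_mult sig_nonneg)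
  finally show ?thesis .
qed

lemma e_xsq:
  assumes j: "j \<in> {1..d}" and N: "N \<ge> 1"
  shows "(\<integral>x. \<bar>avg N (\<lambda>z. (fst z j)^2) x\<bar> \<partial>PiM {1..N} (\<lambda>_. D)) \<le> (sig j)^2"
  using avg_bound1[OF Dp x_facts(1)[OF j] N] by (simp add: sig_sq)

end



context td begin

abbreviation "hh j \<equiv> (\<lambda>z::sample. ((\<Sum>i\<in>{1..d}. fst z i) + snd z) * fst z j)"

lemma decomp:
  "avg N (hh j) x = avg N (\<lambda>z. snd z * fst z j) x + (\<Sum>i\<in>Srob \<union> Svul. avg N (\<lambda>z. fst z i * fst z j) x)
     + (\<Sum>i\<in>Sirr. avg N (\<lambda>z. fst z i * fst z j) x)"
proof -
  have "hh j = (\<lambda>z. snd z * fst z j + ((\<Sum>i\<in>Srob \<union> Svul. fst z i * fst z j) + (\<Sum>i\<in>Sirr. fst z i * fst z j)))"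
  proof
    fix z :: sample
    have "(\<Sum>i\<in>{1..d}. fst z i) = (\<Sum>i\<in>Srob \<union> Svul. fst z i) + (\<Sum>i\<in>Sirr. fst z i)"
      unfolding parts(1)[symmetric] by (rule sum.union_disjoint) (use fin parts in auto)
    then show "hh j z = snd z * fst z j + ((\<Sum>i\<in>Srob \<union> Svul. fst z i * fst z j) + (\<Sum>i\<in>Sirr. fst z i * fst z j))"
      by (simp add: sum_distrib_right sum_distrib_left algebra_simps)
  qed
  then show ?thesis using fin by (simp add: avg_add avg_sum)
qed

lemma irr_split:
  assumes j: "j \<in> Sirr"
  shows "(\<Sum>i\<in>Sirr. avg N (\<lambda>z. fst z i * fst z j) x) = avg N (\<lambda>z. (fst z j)^2) x + avg N (\<lambda>z. fst z j * T j z) x"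
proof -
  have "(\<lambda>z. \<Sum>i\<in>Sirr. fst z i * fst z j) = (\<lambda>z. (fst z j)^2 + fst z j * T j z)"
  proof
    fix z :: sample
    show "(\<Sum>i\<in>Sirr. fst z i * fst z j) = (fst z j)^2 + fst z j * T j z"
      unfolding T_def using j fin by (simp add: sum.remove power2_eq_square sum_distrib_left algebra_simps)
  qed
  then have "avg N (\<lambda>z. \<Sum>i\<in>Sirr. fst z i * fst z j) x = avg N (\<lambda>z. (fst z j)^2) x + avg N (\<lambda>z. fst z j * T j z) x"
    by (simp add: avg_add)
  then show ?thesis using fin by (simp add: avg_sum)
qed

lemma bound_R:
  assumes j: "j \<in> {1..d}" "j \<notin> Sirr" and N: "N \<ge> 1"
  shows "(\<integral>x. \<bar>avg N (hh j) x\<bar> \<partial>PiM {1..N} (\<lambda>_. D)) \<le>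
     sig j + (\<Sum>i\<in>Srob \<union> Svul. sig i * sig j) + (\<Sum>i\<in>Sirr. sig i * sig j / sqrt N)"
proof -
  let ?P = "PiM {1..N} (\<lambda>_. D)"
  have Rd: "i \<in> Srob \<union> Svul \<Longrightarrow> i \<in> {1..d}" for i using Sirr_sub by auto
  have Id: "i \<in> Sirr \<Longrightarrow> i \<in> {1..d}" for i using Sirr_sub by auto
  have ia: "integrable ?P (\<lambda>x. \<bar>avg N (\<lambda>z. snd z * fst z j) x\<bar>)"
    by (rule avg_abs_int[OF Dp intD_yx[OF j(1)]])
  have ib: "integrable ?P (\<lambda>x. \<bar>avg N (\<lambda>z. fst z i * fst z j) x\<bar>)" if "i \<in> {1..d}" for i
    by (rule avg_abs_int[OF Dp intD_xx[OF that j(1)]])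
  have "(\<integral>x. \<bar>avg N (hh j) x\<bar> \<partial>?P) \<le> (\<integral>x. \<bar>avg N (\<lambda>z. snd z * fst z j) x\<bar> + (\<Sum>i\<in>Srob \<union> Svul. \<bar>avg N (\<lambda>z. fst z i * fst z j) x\<bar>)
     + (\<Sum>i\<in>Sirr. \<bar>avg N (\<lambda>z. fst z i * fst z j) x\<bar>) \<partial>?P)"
  proof (rule integral_mono)
    show "integrable ?P (\<lambda>x. \<bar>avg N (hh j) x\<bar>)"
      by (rule avg_abs_int[OF Dp]) (intro Bochner_Integration.integrable_mult_left
          Bochner_Integration.integrable_add Bochner_Integration.integrable_sum x_facts(4) intD_yx[OF j(1)]
          intD_xx j(1) | simp add: distrib_right sum_distrib_right)+
    show "integrable ?P (\<lambda>x. \<bar>avg N (\<lambda>z. snd z * fst z j) x\<bar> + (\<Sum>i\<in>Srob \<union> Svul. \<bar>avg N (\<lambda>z. fst z i * fst z j) x\<bar>)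
     + (\<Sum>i\<in>Sirr. \<bar>avg N (\<lambda>z. fst z i * fst z j) x\<bar>))"
      using ia ib Rd Id by (intro Bochner_Integration.integrable_add Bochner_Integration.integrable_sum) auto
    fix x
    show "\<bar>avg N (hh j) x\<bar> \<le> \<bar>avg N (\<lambda>z. snd z * fst z j) x\<bar> + (\<Sum>i\<in>Srob \<union> Svul. \<bar>avg N (\<lambda>z. fst z i * fst z j) x\<bar>)
     + (\<Sum>i\<in>Sirr. \<bar>avg N (\<lambda>z. fst z i * fst z j) x\<bar>)"
    proof -
      have "\<bar>\<Sum>i\<in>Srob \<union> Svul. avg N (\<lambda>z. fst z i * fst z j) x\<bar> \<le> (\<Sum>i\<in>Srob \<union> Svul. \<bar>avg N (\<lambda>z. fst z i * fst z j) x\<bar>)"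
        by (rule sum_abs)
      moreover have "\<bar>\<Sum>i\<in>Sirr. avg N (\<lambda>z. fst z i * fst z j) x\<bar> \<le> (\<Sum>i\<in>Sirr. \<bar>avg N (\<lambda>z. fst z i * fst z j) x\<bar>)"
        by (rule sum_abs)
      ultimately show ?thesis unfolding decomp by linarith
    qed
  qed
  also have "\<dots> = (\<integral>x. \<bar>avg N (\<lambda>z. snd z * fst z j) x\<bar> \<partial>?P) + (\<Sum>i\<in>Srob \<union> Svul. \<integral>x. \<bar>avg N (\<lambda>z. fst z i * fst z j) x\<bar> \<partial>?P)
     + (\<Sum>i\<in>Sirr. \<integral>x. \<bar>avg N (\<lambda>z. fst z i * fst z j) x\<bar> \<partial>?P)"
  proof -
    have IR: "integrable ?P (\<lambda>x. \<Sum>i\<in>Srob \<union> Svul. \<bar>avg N (\<lambda>z. fst z i * fst z j) x\<bar>)"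
      by (rule Bochner_Integration.integrable_sum) (use ib Rd in auto)
    have II: "integrable ?P (\<lambda>x. \<Sum>i\<in>Sirr. \<bar>avg N (\<lambda>z. fst z i * fst z j) x\<bar>)"
      by (rule Bochner_Integration.integrable_sum) (use ib Id in auto)
    have IS: "(\<integral>x. (\<Sum>i\<in>Srob \<union> Svul. \<bar>avg N (\<lambda>z. fst z i * fst z j) x\<bar>) \<partial>?P) = (\<Sum>i\<in>Srob \<union> Svul. \<integral>x. \<bar>avg N (\<lambda>z. fst z i * fst z j) x\<bar> \<partial>?P)"
      by (rule Bochner_Integration.integral_sum) (use ib Rd in auto)
    have IS2: "(\<integral>x. (\<Sum>i\<in>Sirr. \<bar>avg N (\<lambda>z. fst z i * fst z j) x\<bar>) \<partial>?P) = (\<Sum>i\<in>Sirr. \<integral>x. \<bar>avg N (\<lambda>z. fst z i * fst z j) x\<bar> \<partial>?P)"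
      by (rule Bochner_Integration.integral_sum) (use ib Id in auto)
    note ad = Bochner_Integration.integrable_add
    show ?thesis
      apply (subst Bochner_Integration.integral_add[OF ad[OF ia IR] II])
      apply (subst Bochner_Integration.integral_add[OF ia IR])
      apply (subst IS)
      apply (subst IS2)
      ..
  qed
  also have "\<dots> \<le> sig j + (\<Sum>i\<in>Srob \<union> Svul. sig i * sig j) + (\<Sum>i\<in>Sirr. sig i * sig j / sqrt N)"
  proof (intro add_mono sum_mono)
    show "(\<integral>x. \<bar>avg N (\<lambda>z. snd z * fst z j) x\<bar> \<partial>?P) \<le> sig j" by (rule e_yx[OF j(1) N])
    fix i assume i: "i \<in> Srob \<union> Svul"
    show "(\<integral>x. \<bar>avg N (\<lambda>z. fst z i * fst z j) x\<bar> \<partial>?P) \<le> sig i * sig j" by (rule e_xx[OF Rd[OF i] j(1) N])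
  next
    fix i assume i: "i \<in> Sirr"
    then have "j \<noteq> i" using j(2) by blast
    then show "(\<integral>x. \<bar>avg N (\<lambda>z. fst z i * fst z j) x\<bar> \<partial>?P) \<le> sig i * sig j / sqrt N"
      by (rule e_xx_irr[OF i j(1) _ N])
  qed
  finally show ?thesis .
qed

lemma bound_I:
  assumes j: "j \<in> Sirr" and N: "N \<ge> 1"
  shows "(\<integral>x. \<bar>avg N (hh j) x\<bar> \<partial>PiM {1..N} (\<lambda>_. D)) \<le>
     sig j / sqrt N + (\<Sum>i\<in>Srob \<union> Svul. sig i * sig j / sqrt N) + (sig j)^2 + sig j * W / sqrt N"
proof -
  let ?P = "PiM {1..N} (\<lambda>_. D)"
  have jd: "j \<in> {1..d}" using j Sirr_sub by auto
  have Rd: "i \<in> Srob \<union> Svul \<Longrightarrow> i \<in> {1..d}" for i using Sirr_sub by auto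
  have Rn: "i \<in> Srob \<union> Svul \<Longrightarrow> i \<noteq> j" for i using j parts by auto
  have ia: "integrable ?P (\<lambda>x. \<bar>avg N (\<lambda>z. snd z * fst z j) x\<bar>)"
    by (rule avg_abs_int[OF Dp intD_yx[OF jd]])
  have ib: "integrable ?P (\<lambda>x. \<bar>avg N (\<lambda>z. fst z i * fst z j) x\<bar>)" if "i \<in> {1..d}" for i
    by (rule avg_abs_int[OF Dp intD_xx[OF that jd]])
  have ic: "integrable ?P (\<lambda>x. \<bar>avg N (\<lambda>z. (fst z j)^2) x\<bar>)"
    by (rule avg_abs_int[OF Dp x_facts(1)[OF jd]])
  have id: "integrable ?P (\<lambda>x. \<bar>avg N (\<lambda>z. fst z j * T j z) x\<bar>)"
    by (rule avg_abs_int[OF Dp T_facts(3)[OF j]])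
  have "(\<integral>x. \<bar>avg N (hh j) x\<bar> \<partial>?P) \<le> (\<integral>x. \<bar>avg N (\<lambda>z. snd z * fst z j) x\<bar> + (\<Sum>i\<in>Srob \<union> Svul. \<bar>avg N (\<lambda>z. fst z i * fst z j) x\<bar>)
     + \<bar>avg N (\<lambda>z. (fst z j)^2) x\<bar> + \<bar>avg N (\<lambda>z. fst z j * T j z) x\<bar> \<partial>?P)"
  proof (rule integral_mono)
    show "integrable ?P (\<lambda>x. \<bar>avg N (hh j) x\<bar>)"
      by (rule avg_abs_int[OF Dp]) (intro Bochner_Integration.integrable_mult_left
          Bochner_Integration.integrable_add Bochner_Integration.integrable_sum x_facts(4) intD_yx[OF jd]
          intD_xx jd | simp add: distrib_right sum_distrib_right)+
    show "integrable ?P (\<lambda>x. \<bar>avg N (\<lambda>z. snd z * fst z j) x\<bar> + (\<Sum>i\<in>Srob \<union> Svul. \<bar>avg N (\<lambda>z. fst z i * fst z j) x\<bar>)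
     + \<bar>avg N (\<lambda>z. (fst z j)^2) x\<bar> + \<bar>avg N (\<lambda>z. fst z j * T j z) x\<bar>)"
      using ia ib ic id Rd by (intro Bochner_Integration.integrable_add Bochner_Integration.integrable_sum) auto
    fix x
    show "\<bar>avg N (hh j) x\<bar> \<le> \<bar>avg N (\<lambda>z. snd z * fst z j) x\<bar> + (\<Sum>i\<in>Srob \<union> Svul. \<bar>avg N (\<lambda>z. fst z i * fst z j) x\<bar>)
     + \<bar>avg N (\<lambda>z. (fst z j)^2) x\<bar> + \<bar>avg N (\<lambda>z. fst z j * T j z) x\<bar>"
    proof -
      have "\<bar>\<Sum>i\<in>Srob \<union> Svul. avg N (\<lambda>z. fst z i * fst z j) x\<bar> \<le> (\<Sum>i\<in>Srob \<union> Svul. \<bar>avg N (\<lambda>z. fst z i * fst z j) x\<bar>)"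
        by (rule sum_abs)
      then show ?thesis unfolding decomp irr_split[OF j] by linarith
    qed
  qed
  also have "\<dots> = (\<integral>x. \<bar>avg N (\<lambda>z. snd z * fst z j) x\<bar> \<partial>?P) + (\<Sum>i\<in>Srob \<union> Svul. \<integral>x. \<bar>avg N (\<lambda>z. fst z i * fst z j) x\<bar> \<partial>?P)
     + (\<integral>x. \<bar>avg N (\<lambda>z. (fst z j)^2) x\<bar> \<partial>?P) + (\<integral>x. \<bar>avg N (\<lambda>z. fst z j * T j z) x\<bar> \<partial>?P)"
  proof -
    have IR: "integrable ?P (\<lambda>x. \<Sum>i\<in>Srob \<union> Svul. \<bar>avg N (\<lambda>z. fst z i * fst z j) x\<bar>)"
      by (rule Bochner_Integration.integrable_sum) (use ib Rd in auto)
    have IS: "(\<integral>x. (\<Sum>i\<in>Srob \<union> Svul. \<bar>avg N (\<lambda>z. fst z i * fst z j) x\<bar>) \<partial>?P) = (\<Sum>i\<in>Srob \<union> Svul. \<integral>x. \<bar>avg N (\<lambda>z. fst z i * fst z j) x\<bar> \<partial>?P)"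
      by (rule Bochner_Integration.integral_sum) (use ib Rd in auto)
    note ad = Bochner_Integration.integrable_add
    show ?thesis
      apply (subst Bochner_Integration.integral_add[OF ad[OF ad[OF ia IR] ic] id])
      apply (subst Bochner_Integration.integral_add[OF ad[OF ia IR] ic])
      apply (subst Bochner_Integration.integral_add[OF ia IR])
      apply (subst IS)
      ..
  qed
  also have "\<dots> \<le> sig j / sqrt N + (\<Sum>i\<in>Srob \<union> Svul. sig i * sig j / sqrt N) + (sig j)^2 + sig j * W / sqrt N"
  proof (intro add_mono sum_mono)
    show "(\<integral>x. \<bar>avg N (\<lambda>z. snd z * fst z j) x\<bar> \<partial>?P) \<le> sig j / sqrt N" by (rule e_yx_irr[OF j N])
    show "(\<integral>x. \<bar>avg N (\<lambda>z. (fst z j)^2) x\<bar> \<partial>?P) \<le> (sig j)^2" by (rule e_xsq[OF jd N])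
    show "(\<integral>x. \<bar>avg N (\<lambda>z. fst z j * T j z) x\<bar> \<partial>?P) \<le> sig j * W / sqrt N" by (rule e_xT[OF j N])
    fix i assume i: "i \<in> Srob \<union> Svul"
    have "(\<integral>x. \<bar>avg N (\<lambda>z. fst z j * fst z i) x\<bar> \<partial>?P) \<le> sig j * sig i / sqrt N"
      by (rule e_xx_irr[OF j Rd[OF i] Rn[OF i] N])
    then show "(\<integral>x. \<bar>avg N (\<lambda>z. fst z i * fst z j) x\<bar> \<partial>?P) \<le> sig i * sig j / sqrt N"
      by (simp add: mult.commute)
  qed
  finally show ?thesis .
qed

end



lemma final_arith:
  fixes s SR SI Q W rN Rr dI q \<gamma> :: real
  assumes nn: "s \<ge> 0" "SR \<ge> 0" "SI \<ge> 0" "Q \<ge> 0" "W \<ge> 0" "rN > 0" "Rr \<ge> 0" "dI \<ge> 0" "q \<ge> 0" "\<gamma> \<ge> 0"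
    and b: "SR \<le> s * Rr" "SI \<le> s * (dI * \<gamma>)" "Q \<le> s^2 * (dI * \<gamma>^2)" "W \<le> s * (q * \<gamma>)"
  shows "SR + SR * SR + SI * SR / rN + (SI / rN + SR * SI / rN + Q + SI * W / rN)
     \<le> (1 + s + 2 * s^2) * ((Rr + 1) * (Rr + dI * \<gamma> / rN) + dI * (q / rN + 1) * \<gamma>^2)"
proof -
  define K where "K = 1 + s + 2 * s^2"
  define E where "E = dI * \<gamma> / rN"
  have E0: "E \<ge> 0" unfolding E_def using nn by simp
  have sK: "s \<le> K" "s^2 \<le> K" "2 * s^2 \<le> K" unfolding K_def using nn by (auto simp: power2_eq_square)
  have t1: "SR \<le> K * Rr" using b(1) sK(1) nn by (meson mult_right_mono order_trans)
  have "SR * SR \<le> (s * Rr) * (s * Rr)" using b(1) nn by (intro mult_mono) auto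
  also have "\<dots> = s^2 * (Rr * Rr)" by (simp add: power2_eq_square)
  also have "\<dots> \<le> K * (Rr * Rr)" using sK nn by (intro mult_right_mono) auto
  finally have t2: "SR * SR \<le> K * (Rr * Rr)" .
  have "SI * SR / rN = (SI / rN) * SR" by simp
  have SIr: "SI / rN \<le> s * E" unfolding E_def using b(2) nn by (simp add: divide_right_mono)
  have "SI / rN * SR \<le> (s * E) * (s * Rr)" using SIr b(1) nn E0 by (intro mult_mono) auto
  also have "\<dots> = s^2 * (Rr * E)" by (simp add: power2_eq_square)
  finally have t3a: "SI / rN * SR \<le> s^2 * (Rr * E)" .
  have "2 * s^2 * (Rr * E) \<le> K * (Rr * E)" using sK(3) nn E0 by (intro mult_right_mono) auto
  moreover have "SI * SR / rN + SR * SI / rN = 2 * (SI / rN * SR)" by (simp add: algebra_simps)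
  ultimately have t3: "SI * SR / rN + SR * SI / rN \<le> K * (Rr * E)" using t3a by linarith
  have t4: "SI / rN \<le> K * E" using SIr sK(1) E0 by (meson mult_right_mono order_trans)
  have t5: "Q \<le> K * (dI * \<gamma>^2)" using b(3) sK(2) nn by (meson mult_right_mono order_trans zero_le_mult_iff zero_le_power2)
  have "SI * W / rN = (SI / rN) * W" by simp
  also have "\<dots> \<le> (s * E) * (s * (q * \<gamma>))" using SIr b(4) nn E0 by (intro mult_mono) auto
  also have "\<dots> = s^2 * (dI * (q / rN) * \<gamma>^2)" unfolding E_def by (simp add: power2_eq_square)
  also have "\<dots> \<le> K * (dI * (q / rN) * \<gamma>^2)" using sK(2) nn by (intro mult_right_mono) auto
  finally have t6: "SI * W / rN \<le> K * (dI * (q / rN) * \<gamma>^2)" .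
  have eq: "K * ((Rr + 1) * (Rr + E) + dI * (q / rN + 1) * \<gamma>^2)
     = K * Rr + K * (Rr * Rr) + K * (Rr * E) + K * E + K * (dI * \<gamma>^2) + K * (dI * (q / rN) * \<gamma>^2)"
    by (simp add: algebra_simps)
  show ?thesis unfolding K_def[symmetric] E_def[symmetric] eq using t1 t2 t3 t4 t5 t6 by linarith
qed




context td begin

lemma int_hh: "j \<in> {1..d} \<Longrightarrow> integrable D (hh j)"
  by (intro Bochner_Integration.integrable_mult_left
          Bochner_Integration.integrable_add Bochner_Integration.integrable_sum x_facts(4) intD_yx
          intD_xx | simp add: distrib_right sum_distrib_right)+

lemma total:
  assumes N: "N \<ge> 1"
  shows "(\<integral>x. row_l1 d (quantity d N v x) \<partial>PiM {1..N} (\<lambda>_. D))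
    \<le> (1 + sqrt B + 2 * B) * ((real (card Srob) * \<alpha> + real (card Svul) * \<beta> + 1) *
               (real (card Srob) * \<alpha> + real (card Svul) * \<beta> + real (card Sirr) * \<gamma> / sqrt (real N))
             + real (card Sirr) * (sqrt (real (card Sirr) / real N) + 1) * \<gamma>\<^sup>2)"
proof -
  let ?P = "PiM {1..N} (\<lambda>_. D)"
  let ?R = "Srob \<union> Svul"
  define rN where "rN = sqrt (real N)"
  have rN: "rN > 0" unfolding rN_def using N by simp
  define s where "s = sqrt B"
  have s0: "s \<ge> 0" unfolding s_def using B_nonneg by simp
  have s2: "s^2 = B" unfolding s_def using B_nonneg by simp
  define SR where "SR = (\<Sum>i\<in>?R. sig i)"
  define SI where "SI = (\<Sum>i\<in>Sirr. sig i)"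
  define Q where "Q = (\<Sum>i\<in>Sirr. (sig i)^2)"
  define bR where "bR j = sig j + (\<Sum>i\<in>?R. sig i * sig j) + (\<Sum>i\<in>Sirr. sig i * sig j / sqrt N)" for j
  define bI where "bI j = sig j / sqrt N + (\<Sum>i\<in>?R. sig i * sig j / sqrt N) + (sig j)^2 + sig j * W / sqrt N" for j
  have ihh: "integrable ?P (\<lambda>x. \<bar>avg N (hh j) x\<bar>)" if "j \<in> {1..d}" for j
    by (rule avg_abs_int[OF Dp int_hh[OF that]])
  have "(\<integral>x. row_l1 d (quantity d N v x) \<partial>?P) = (\<integral>x. (\<Sum>j\<in>{1..d}. \<bar>avg N (hh j) x\<bar>) \<partial>?P)"
  proof -
    have rq: "row_l1 d (quantity d N v x) = (\<Sum>j\<in>{1..d}. \<bar>avg N (hh j) x\<bar>)" for x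
      unfolding row_l1_def by (rule sum.cong[OF refl]) (simp only: quantity_eq)
    show ?thesis unfolding rq ..
  qed
  also have "\<dots> = (\<Sum>j\<in>{1..d}. (\<integral>x. \<bar>avg N (hh j) x\<bar> \<partial>?P))"
    by (rule Bochner_Integration.integral_sum) (rule ihh)
  also have "\<dots> \<le> (\<Sum>j\<in>{1..d}. if j \<in> Sirr then bI j else bR j)"
  proof (rule sum_mono)
    fix j assume j: "j \<in> {1..d}"
    show "(\<integral>x. \<bar>avg N (hh j) x\<bar> \<partial>?P) \<le> (if j \<in> Sirr then bI j else bR j)"
      using bound_R[OF j _ N] bound_I[of j N] N unfolding bR_def bI_def by auto
  qed
  also have "\<dots> = (\<Sum>j\<in>?R. if j \<in> Sirr then bI j else bR j) + (\<Sum>j\<in>Sirr. if j \<in> Sirr then bI j else bR j)"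
    unfolding parts(1)[symmetric] by (rule sum.union_disjoint) (use fin parts in auto)
  also have "\<dots> = (\<Sum>j\<in>?R. bR j) + (\<Sum>j\<in>Sirr. bI j)"
    using parts by (intro arg_cong2[where f="(+)"] sum.cong) auto
  also have "(\<Sum>j\<in>?R. bR j) = SR + SR * SR + SI * SR / rN"
  proof -
    have a1: "(\<Sum>j\<in>?R. \<Sum>i\<in>?R. sig i * sig j) = SR * SR"
      unfolding SR_def sum_product by (rule sum.swap)
    have a2: "(\<Sum>j\<in>?R. \<Sum>i\<in>Sirr. sig i * sig j / rN) = SI * SR / rN"
      unfolding SI_def SR_def sum_product sum_divide_distrib by (rule sum.swap)
    show ?thesis unfolding bR_def sum.distrib a1 a2[unfolded rN_def] SR_def[symmetric] rN_def ..
  qed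
  also have "(\<Sum>j\<in>Sirr. bI j) = SI / rN + SR * SI / rN + Q + SI * W / rN"
  proof -
    have b2: "(\<Sum>j\<in>Sirr. \<Sum>i\<in>?R. sig i * sig j / rN) = SR * SI / rN"
      unfolding SI_def SR_def sum_product sum_divide_distrib by (rule sum.swap)
    have b1: "(\<Sum>j\<in>Sirr. sig j / rN) = SI / rN" unfolding SI_def sum_divide_distrib ..
    have b4: "(\<Sum>j\<in>Sirr. sig j * W / rN) = SI * W / rN" unfolding SI_def sum_divide_distrib sum_distrib_right ..
    show ?thesis unfolding bI_def sum.distrib b2[unfolded rN_def] b1[unfolded rN_def] b4[unfolded rN_def] Q_def[symmetric] rN_def ..
  qed
  also have "SR + SR * SR + SI * SR / rN + (SI / rN + SR * SI / rN + Q + SI * W / rN)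
     \<le> (1 + s + 2 * s^2) * ((real (card Srob) * \<alpha> + real (card Svul) * \<beta> + 1) *
          (real (card Srob) * \<alpha> + real (card Svul) * \<beta> + real (card Sirr) * \<gamma> / rN)
        + real (card Sirr) * (sqrt (real (card Sirr)) / rN + 1) * \<gamma>^2)"
  proof (rule final_arith)
    show "s \<ge> 0" by (rule s0)
    show "SR \<ge> 0" "SI \<ge> 0" "Q \<ge> 0" unfolding SR_def SI_def Q_def by (auto intro!: sum_nonneg sig_nonneg)
    show "W \<ge> 0" unfolding W_def by (auto intro!: sum_nonneg)
    show "rN > 0" by (rule rN)
    show "real (card Srob) * \<alpha> + real (card Svul) * \<beta> \<ge> 0" "real (card Sirr) \<ge> 0"
      "sqrt (real (card Sirr)) \<ge> 0" "\<gamma> \<ge> 0" using pos by auto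
    have sR: "sig i \<le> s * \<alpha>" if "i \<in> Srob" for i
    proof -
      have "i \<in> {1..d}" using that Sirr_sub by blast
      then show ?thesis using sig_le[of i] that unfolding s_def sc_def by simp
    qed
    have sV: "sig i \<le> s * \<beta>" if "i \<in> Svul" for i
    proof -
      have "i \<notin> Srob" "i \<in> {1..d}" using that parts(2) Sirr_sub by blast+
      then show ?thesis using sig_le[of i] that unfolding s_def sc_def by simp
    qed
    have sI: "sig i \<le> s * \<gamma>" if "i \<in> Sirr" for i
    proof -
      have "i \<notin> Srob" "i \<notin> Svul" "i \<in> {1..d}" using that parts(3,4) Sirr_sub by blast+
      then show ?thesis using sig_le[of i] that unfolding s_def sc_def by simp
    qed
    have "SR = (\<Sum>i\<in>Srob. sig i) + (\<Sum>i\<in>Svul. sig i)"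
      unfolding SR_def by (rule sum.union_disjoint) (use fin parts in auto)
    also have "\<dots> \<le> (\<Sum>i\<in>Srob. s * \<alpha>) + (\<Sum>i\<in>Svul. s * \<beta>)"
      by (intro add_mono sum_mono sR sV)
    also have "\<dots> = s * (real (card Srob) * \<alpha> + real (card Svul) * \<beta>)" by (simp add: algebra_simps)
    finally show "SR \<le> s * (real (card Srob) * \<alpha> + real (card Svul) * \<beta>)" .
    have "SI \<le> (\<Sum>i\<in>Sirr. s * \<gamma>)" unfolding SI_def by (intro sum_mono sI)
    then show "SI \<le> s * (real (card Sirr) * \<gamma>)" by (simp add: algebra_simps)
    have "Q \<le> (\<Sum>i\<in>Sirr. (s * \<gamma>)^2)" unfolding Q_def
      by (intro sum_mono power_mono sI sig_nonneg)
    then show Qb: "Q \<le> s^2 * (real (card Sirr) * \<gamma>^2)" by (simp add: algebra_simps power_mult_distrib)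
    have "W \<le> sqrt (s^2 * (real (card Sirr) * \<gamma>^2))" unfolding W_def Q_def[symmetric]
      using Qb by simp
    also have "\<dots> = s * (sqrt (real (card Sirr)) * \<gamma>)" using s0 pos by (simp add: real_sqrt_mult)
    finally show "W \<le> s * (sqrt (real (card Sirr)) * \<gamma>)" .
  qed
  also have "\<dots> = (1 + sqrt B + 2 * B) * ((real (card Srob) * \<alpha> + real (card Svul) * \<beta> + 1) *
               (real (card Srob) * \<alpha> + real (card Svul) * \<beta> + real (card Sirr) * \<gamma> / sqrt (real N))
             + real (card Sirr) * (sqrt (real (card Sirr) / real N) + 1) * \<gamma>\<^sup>2)"
    unfolding s2 s_def[symmetric] rN_def by (simp add: real_sqrt_divide)
  finally show ?thesis by simp
qed

end

theorem lemmaE2: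
  fixes Cbar :: real
  shows "\<exists>K>0. \<forall>(D :: sample measure) d Srob Svul Sirr \<alpha> \<beta> \<gamma> C Cn qr qv (N::nat) (v :: nat \<Rightarrow> real).
    test_dist D d Srob Svul Sirr \<alpha> \<beta> \<gamma> C Cn qr qv \<and> N \<ge> 1 \<and>
    (\<forall>i\<in>{1..d}. C i \<le> Cbar \<and> (\<forall>n\<in>{2,3,4::nat}. Cn i n \<le> Cbar)) \<longrightarrow>
    integral\<^sup>L (PiM {1..N} (\<lambda>_. D)) (\<lambda>s. row_l1 d (quantity d N v s))
      \<le> K * ((real (card Srob) * \<alpha> + real (card Svul) * \<beta> + 1) *
               (real (card Srob) * \<alpha> + real (card Svul) * \<beta> + real (card Sirr) * \<gamma> / sqrt (real N))
             + real (card Sirr) * (sqrt (real (card Sirr) / real N) + 1) * \<gamma>\<^sup>2)"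
proof (intro exI[of _ "1 + sqrt (\<bar>Cbar\<bar> + Cbar^2) + 2 * (\<bar>Cbar\<bar> + Cbar^2)"] conjI allI impI)
  show "0 < 1 + sqrt (\<bar>Cbar\<bar> + Cbar^2) + 2 * (\<bar>Cbar\<bar> + Cbar^2)"
    by (simp add: add_pos_nonneg)
  fix D :: "sample measure" and d Srob Svul Sirr \<alpha> \<beta> \<gamma> C Cn qr qv and N :: nat and v :: "nat \<Rightarrow> real"
  assume H: "test_dist D d Srob Svul Sirr \<alpha> \<beta> \<gamma> C Cn qr qv \<and> N \<ge> 1 \<and>
    (\<forall>i\<in>{1..d}. C i \<le> Cbar \<and> (\<forall>n\<in>{2,3,4::nat}. Cn i n \<le> Cbar))"
  interpret td D d Srob Svul Sirr \<alpha> \<beta> \<gamma> C Cn qr qv Cbar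
    using H by unfold_locales auto
  show "integral\<^sup>L (PiM {1..N} (\<lambda>_. D)) (\<lambda>s. row_l1 d (quantity d N v s))
      \<le> (1 + sqrt (\<bar>Cbar\<bar> + Cbar^2) + 2 * (\<bar>Cbar\<bar> + Cbar^2)) * ((real (card Srob) * \<alpha> + real (card Svul) * \<beta> + 1) *
               (real (card Srob) * \<alpha> + real (card Svul) * \<beta> + real (card Sirr) * \<gamma> / sqrt (real N))
             + real (card Sirr) * (sqrt (real (card Sirr) / real N) + 1) * \<gamma>\<^sup>2)"
    using total[of N v] H unfolding B_def by auto
qed



end
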